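(* (i) Suppose the first Piola–Kirchhoff stress of a Cauchy elastic solid is given by $P^{aA}=g^{ab}\sum_{i=1}^3\phi_i\,\partial\psi_i/\partial F^b{}_A$ with scalar functions $\phi_i,\psi_i$ of $(X,\mathbf F,\mathbf G,\mathbf g)$ (some of which may be identically zero or constant). If the response is objective, i.e. all $\phi_i$ and $\psi_i$ depend on $\mathbf F$ only through $\mathbf C^\flat=\mathbf F^\star\mathbf g\mathbf F$, then the balance of angular momentum $P^{aA}F^b{}_A=P^{bA}F^a{}_A$ holds for every $\mathbf F$. (ii) The converse fails: there exist Cauchy elastic response functions (e.g. Ericksen solids $P^{aA}=g^{ab}\phi_1(\mathbf F,\mathbf G,\mathbf g)\partial\psi_1/\partial F^b{}_A$ with $\psi_1$ a function of $(\mathbf C^\flat,\mathbf G)$ and $\phi_1$ a nonvanishing function of $\mathbf F$ that is not invariant under $\mathbf F\mapsto\mathbf Q\mathbf F$ for $\mathbf g$-orthogonal $\mathbf Q$) that satisfy the balance of angular momentum for every $\mathbf F$ but are not objective, i.e. $\hat{\mathbf P}(\mathbf Q\mathbf F)\neq\mathbf Q\hat{\mathbf P}(\mathbf F)$ for some $\mathbf g$-orthogonal $\mathbf Q$.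
   Context: Setting: a body $(\mathcal B,\mathbf G)$ deforming in Euclidean space $(\mathcal S,\mathbf g)$ with deformation gradient $\mathbf F$ (components $F^a{}_A$), dual $\mathbf F^\star$, right Cauchy–Green tensor $\mathbf C^\flat=\mathbf F^\star\mathbf g\mathbf F$. A Cauchy elastic solid has constitutive law $\mathbf P=\hat{\mathbf P}(X,\mathbf F,\mathbf G,\mathbf g)$ for the first Piola–Kirchhoff stress, with no energy function assumed. Objectivity means $\hat{\mathbf P}(X,\mathbf Q\mathbf F,\mathbf G,\mathbf g)=\mathbf Q\hat{\mathbf P}(X,\mathbf F,\mathbf G,\mathbf g)$ for all $\mathbf g$-orthogonal $\mathbf Q$. Balance of angular momentum means $\mathbf P\mathbf F^\star=\mathbf F\mathbf P^\star$, i.e. $P^{aA}F^b{}_A=P^{bA}F^a{}_A$. *)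

theory Defs
  imports "HOL-Analysis.Analysis"
begin

text \<open>Tensors in 3D are represented by their component matrices in real^3^3.
  F $ a $ A = F^a_A, g $ a $ b = g_ab, P $ a $ A = P^{aA}.
  Inverse metric components g^ab are matrix_inv g.\<close>

type_synonym mat3 = "real^3^3"

definition metric :: "mat3 \<Rightarrow> bool" where
  "metric g \<longleftrightarrow> transpose g = g \<and> (\<forall>v::real^3. v \<noteq> 0 \<longrightarrow> v \<bullet> (g *v v) > 0)"

definition g_orthogonal :: "mat3 \<Rightarrow> mat3 \<Rightarrow> bool" where
  "g_orthogonal g Q \<longleftrightarrow> transpose Q ** g ** Q = g"

definition rightCG :: "mat3 \<Rightarrow> mat3 \<Rightarrow> mat3" where
  "rightCG g F = transpose F ** g ** F"

definition dF :: "(mat3 \<Rightarrow> real) \<Rightarrow> mat3 \<Rightarrow> 3 \<Rightarrow> 3 \<Rightarrow> real" where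
  "dF f F b A = frechet_derivative f (at F) (axis b (axis A 1))"

definition stressP :: "mat3 \<Rightarrow> (nat \<Rightarrow> mat3 \<Rightarrow> real) \<Rightarrow> (nat \<Rightarrow> mat3 \<Rightarrow> real) \<Rightarrow> mat3 \<Rightarrow> mat3" where
  "stressP g \<phi> \<psi> F = (\<chi> a A. \<Sum>b\<in>UNIV. (matrix_inv g) $ a $ b *
      (\<Sum>i\<in>{1..3}. \<phi> i F * dF (\<psi> i) F b A))"

definition responseP ::
  "(nat \<Rightarrow> 'x \<Rightarrow> mat3 \<Rightarrow> mat3 \<Rightarrow> mat3 \<Rightarrow> real) \<Rightarrow> (nat \<Rightarrow> 'x \<Rightarrow> mat3 \<Rightarrow> mat3 \<Rightarrow> mat3 \<Rightarrow> real)
    \<Rightarrow> 'x \<Rightarrow> mat3 \<Rightarrow> mat3 \<Rightarrow> mat3 \<Rightarrow> mat3" where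
  "responseP \<phi> \<psi> X F G g = stressP g (\<lambda>i F'. \<phi> i X F' G g) (\<lambda>i F'. \<psi> i X F' G g) F"

definition angmom :: "mat3 \<Rightarrow> mat3 \<Rightarrow> bool" where
  "angmom P F \<longleftrightarrow> (\<forall>a b. (\<Sum>A\<in>UNIV. P $ a $ A * F $ b $ A) = (\<Sum>A\<in>UNIV. P $ b $ A * F $ a $ A))"

definition objective :: "('x \<Rightarrow> mat3 \<Rightarrow> mat3 \<Rightarrow> mat3 \<Rightarrow> mat3) \<Rightarrow> bool" where
  "objective Ph \<longleftrightarrow> (\<forall>X F G g Q. metric G \<and> metric g \<and> g_orthogonal g Q \<longrightarrow>
      Ph X (Q ** F) G g = Q ** Ph X F G g)"

end

theory Submission
  imports Defs
begin
lemma symh: fixes h :: "real^3^3"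
  assumes "transpose h = h" shows "h$i$j = h$j$i" 
proof -
  have "transpose h $ i $ j = h $ j $ i" by (simp add: transpose_def)
  then show ?thesis using assms by simp
qed
definition Wm :: "3 \<Rightarrow> 3 \<Rightarrow> real^3^3" where
 "Wm p q = (\<chi> i j. (if i = p \<and> j = q then 1 else 0) - (if i = q \<and> j = p then 1 else 0))"

lemma sum_delta_mult: "(\<Sum>k\<in>UNIV. (f k::real) * (if k = (p::'a::finite) then 1 else 0)) = f p"
proof -
  have e: "(\<lambda>k. f k * (if k=p then 1 else 0)) = (\<lambda>k. if k = p then f k else 0)" by auto
  show ?thesis by (subst e) (simp add: sum.delta[OF finite])
qed

lemma multW: "(M ** Wm p q)$i$j = (if j = q then M$i$p else 0) - (if j = p then M$i$q else 0)"
proof -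
  have "(M ** Wm p q)$i$j = (\<Sum>k\<in>UNIV. M$i$k * (if k = p \<and> j = q then 1 else 0)) - (\<Sum>k\<in>UNIV. M$i$k * (if k = q \<and> j = p then 1 else 0))"
    by (simp add: matrix_matrix_mult_def Wm_def right_diff_distrib sum_subtractf)
  also have "\<dots> = (if j = q then M$i$p else 0) - (if j = p then M$i$q else 0)"
    by (cases "j = q"; cases "j = p"; simp add: sum_delta_mult)
  finally show ?thesis .
qed

lemma multWh: "((M ** Wm p q) ** h)$i$k = M$i$p * h$q$k - M$i$q * h$p$k"
proof -
  have "((M ** Wm p q) ** h)$i$k = (\<Sum>j\<in>UNIV. ((if j = q then M$i$p else 0) - (if j = p then M$i$q else 0)) * h$j$k)"
    unfolding matrix_matrix_mult_def[of "M ** Wm p q" h] by (simp add: multW)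
  also have "\<dots> = (\<Sum>j\<in>UNIV. (if j = q then M$i$p * h$j$k else 0)) - (\<Sum>j\<in>UNIV. (if j = p then M$i$q * h$j$k else 0))"
    unfolding sum_subtractf[symmetric] by (rule sum.cong) auto
  also have "\<dots> = M$i$p * h$q$k - M$i$q * h$p$k" by simp
  finally show ?thesis .
qed

lemma cube:
  fixes h :: "real^3^3"
  assumes "transpose h = h"
  shows "(h ** Wm p q) ** (h ** Wm p q) ** (h ** Wm p q) = (-(h$p$p*h$q$q - h$p$q*h$p$q)) *\<^sub>R (h ** Wm p q)"
proof -
  have e2: "(h ** Wm p q) ** (h ** Wm p q) ** (h ** Wm p q) = ((((h ** Wm p q) ** h) ** Wm p q) ** h) ** Wm p q"
    by (simp only: matrix_mul_assoc)
  have hs: "h$q$p = h$p$q" by (rule symh[OF assms])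
  show ?thesis
    unfolding e2 vec_eq_iff
  proof (intro allI)
    fix i j
    show "((((h ** Wm p q) ** h) ** Wm p q ** h) ** Wm p q) $ i $ j = ((- (h $ p $ p * h $ q $ q - h $ p $ q * h $ p $ q)) *\<^sub>R (h ** Wm p q)) $ i $ j"
      unfolding multW multWh vector_scaleR_component
      using hs by (cases "j = q"; cases "j = p"; simp add: algebra_simps)
  qed
qed

lemma mm_add_r: "((A::real^3^3) + B) ** C = A ** C + B ** C"
  by (simp add: matrix_matrix_mult_def vec_eq_iff sum.distrib distrib_right)
lemma mm_add_l: "(C::real^3^3) ** (A + B) = C ** A + C ** B"
  by (rule matrix_add_ldistrib)
lemma mm_scale_l: "(r *\<^sub>R (A::real^3^3)) ** B = r *\<^sub>R (A ** B)"
  by (simp add: scalar_matrix_assoc)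
lemma mm_scale_r: "(A::real^3^3) ** (r *\<^sub>R B) = r *\<^sub>R (A ** B)"
  by (simp add: matrix_matrix_mult_def vec_eq_iff sum_distrib_left mult_ac)
lemma mm_minus_l: "(- (A::real^3^3)) ** B = - (A ** B)"
  by (simp add: matrix_matrix_mult_def vec_eq_iff sum_negf)
lemma mm_minus_r: "(A::real^3^3) ** (- B) = - (A ** B)"
  by (simp add: matrix_matrix_mult_def vec_eq_iff sum_negf)
lemma mm_diff_r: "((A::real^3^3) - B) ** C = A ** C - B ** C"
  by (simp add: matrix_matrix_mult_def vec_eq_iff sum_subtractf left_diff_distrib)
lemma mm_diff_l: "(C::real^3^3) ** (A - B) = C ** A - C ** B"
  by (simp add: matrix_matrix_mult_def vec_eq_iff sum_subtractf right_diff_distrib)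
lemma tr_add: "transpose ((A::real^3^3) + B) = transpose A + transpose B"
  by (simp add: transpose_def vec_eq_iff)
lemma tr_scale: "transpose (r *\<^sub>R (A::real^3^3)) = r *\<^sub>R transpose A"
  by (simp add: transpose_def vec_eq_iff)

definition PA :: "real^3^3 \<Rightarrow> real \<Rightarrow> real \<Rightarrow> real \<Rightarrow> real^3^3" where
  "PA A a b c = a *\<^sub>R mat 1 + b *\<^sub>R A + c *\<^sub>R (A ** A)"

lemma PA_mult:
  assumes "A ** A ** A = (- \<sigma>) *\<^sub>R A"
  shows "PA A a b c ** PA A a' b' c' = PA A (a*a') (a*b' + b*a' - \<sigma>*(b*c' + c*b')) (a*c' + c*a' + b*b' - \<sigma>*c*c')"
proof -
  have c4: "A ** A ** A ** A = (- \<sigma>) *\<^sub>R (A ** A)" using assms by (simp add: mm_scale_l mm_minus_l)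
  show ?thesis unfolding PA_def
    by (simp add: mm_add_r mm_add_l mm_diff_r mm_diff_l mm_minus_l mm_minus_r mm_scale_l mm_scale_r matrix_mul_assoc assms c4 algebra_simps)
qed


lemma Wm_nth: "Wm p q $ i $ j = (if i = p \<and> j = q then 1 else 0) - (if i = q \<and> j = p then 1 else 0)"
  unfolding Wm_def by simp
lemma tr_W: "transpose (Wm p q) = - Wm p q"
proof -
  have "transpose (Wm p q) $ i $ j = (- Wm p q) $ i $ j" for i j
    unfolding transpose_def vec_lambda_beta Wm_nth vector_uminus_component
    by (cases "i = p"; cases "j = q"; cases "i = q"; cases "j = p"; simp)
  then show ?thesis by (simp add: vec_eq_iff)
qed

lemma gA:
  assumes "g ** h = mat 1" "h ** g = mat 1" "transpose h = h"
  shows "transpose (h ** Wm p q) ** g = - (g ** (h ** Wm p q))"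
proof -
  have "transpose (h ** Wm p q) ** g = (- Wm p q) ** (h ** g)"
    by (simp add: matrix_transpose_mul tr_W assms(3) matrix_mul_assoc)
  also have "\<dots> = - Wm p q" by (simp add: assms(2) mm_minus_l)
  also have "\<dots> = - (g ** (h ** Wm p q))" by (simp add: matrix_mul_assoc assms(1))
  finally show ?thesis .
qed

lemma tr_PA: "transpose (PA A a b c) = PA (transpose A) a b c"
  by (simp add: PA_def tr_add tr_scale matrix_transpose_mul)

lemma PA_g:
  assumes "transpose A ** g = - (g ** A)"
  shows "transpose (PA A a b c) ** g = g ** PA A a (-b) c"
proof -
  have e: "(transpose A ** transpose A) ** g = g ** (A ** A)"
  proof -
    have "(transpose A ** transpose A) ** g = transpose A ** (transpose A ** g)" by (simp add: matrix_mul_assoc)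
    also have "\<dots> = - ((transpose A ** g) ** A)" by (simp add: assms mm_minus_r matrix_mul_assoc)
    also have "\<dots> = g ** (A ** A)" by (simp add: assms mm_minus_l matrix_mul_assoc)
    finally show ?thesis .
  qed
  show ?thesis unfolding tr_PA unfolding PA_def
    by (simp add: mm_add_r mm_add_l mm_diff_l mm_scale_l mm_scale_r assms e mm_minus_l mm_minus_r)
qed

lemma orth_curve:
  assumes "A ** A ** A = (- \<sigma>) *\<^sub>R A" "transpose A ** g = - (g ** A)"
    and "2*k - s * s - \<sigma>*k*k = 0"
  shows "transpose (PA A 1 s k) ** g ** PA A 1 s k = g"
proof -
  have "transpose (PA A 1 s k) ** g ** PA A 1 s k = g ** (PA A 1 (-s) k ** PA A 1 s k)"
    by (simp add: PA_g[OF assms(2)] matrix_mul_assoc)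
  also have "PA A 1 (-s) k ** PA A 1 s k = PA A 1 0 0"
    unfolding PA_mult[OF assms(1)] using assms(3) by (simp add: algebra_simps)
  also have "PA A 1 0 0 = mat 1" by (simp add: PA_def)
  finally show ?thesis by simp
qed

definition sfun :: "real \<Rightarrow> real \<Rightarrow> real" where "sfun \<sigma> t = t / (1 + \<sigma>*t*t/4)"
definition kfun :: "real \<Rightarrow> real \<Rightarrow> real" where "kfun \<sigma> t = (t*t/2) / (1 + \<sigma>*t*t/4)"

lemma sk_rel: "2*kfun \<sigma> t - sfun \<sigma> t * sfun \<sigma> t - \<sigma> * kfun \<sigma> t * kfun \<sigma> t = 0"
proof (cases "1 + \<sigma>*t*t/4 = 0")
  case True then show ?thesis by (simp add: sfun_def kfun_def)
next
  case False
  define d where "d = 1 + \<sigma>*t*t/4"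
  have d0: "d \<noteq> 0" using False by (simp add: d_def)
  have sd: "sfun \<sigma> t * d = t" using d0 by (simp add: sfun_def d_def[symmetric])
  have kd: "kfun \<sigma> t * d = t*t/2" using d0 by (simp add: kfun_def d_def[symmetric])
  have "d*d*(2*kfun \<sigma> t - sfun \<sigma> t * sfun \<sigma> t - \<sigma> * kfun \<sigma> t * kfun \<sigma> t)
     = 2*(kfun \<sigma> t * d)*d - (sfun \<sigma> t * d)*(sfun \<sigma> t * d) - \<sigma>*(kfun \<sigma> t * d)*(kfun \<sigma> t * d)"
    by (simp add: algebra_simps)
  also have "\<dots> = 0" unfolding sd kd by (simp add: d_def algebra_simps)
  finally show ?thesis using d0 by simp
qed

lemma curve_deriv:
  "((\<lambda>t. PA A 1 (sfun \<sigma> t) (kfun \<sigma> t)) has_vector_derivative A) (at 0)"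
proof -
  have ds: "(sfun \<sigma> has_field_derivative 1) (at 0)"
    unfolding sfun_def[abs_def]
    by (rule derivative_eq_intros refl | simp)+
  have dk: "(kfun \<sigma> has_field_derivative 0) (at 0)"
    unfolding kfun_def[abs_def]
    by (rule derivative_eq_intros refl | simp)+
  have "((\<lambda>t. 1 *\<^sub>R mat 1 + sfun \<sigma> t *\<^sub>R A + kfun \<sigma> t *\<^sub>R (A ** A)) has_vector_derivative
      (0 + (sfun \<sigma> 0 *\<^sub>R 0 + 1 *\<^sub>R A) + (kfun \<sigma> 0 *\<^sub>R 0 + 0 *\<^sub>R (A ** A)))) (at 0)"
    by (intro has_vector_derivative_add has_vector_derivative_scaleR has_vector_derivative_const ds dk)
  then show ?thesis by (simp add: PA_def)
qed

lemma metric_inv: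
  assumes "metric g"
  shows "g ** matrix_inv g = mat 1 \<and> matrix_inv g ** g = mat 1 \<and> transpose (matrix_inv g) = matrix_inv g"
proof -
  have gs: "transpose g = g" using assms by (simp add: metric_def)
  have "\<forall>x. g *v x = 0 \<longrightarrow> x = 0"
  proof (intro allI impI)
    fix x :: "real^3" assume "g *v x = 0"
    show "x = 0"
    proof (rule ccontr)
      assume "x \<noteq> 0"
      then have "x \<bullet> (g *v x) > 0" using assms by (simp add: metric_def)
      then show False using \<open>g *v x = 0\<close> by simp
    qed
  qed
  then have "invertible g"
    using invertible_left_inverse matrix_left_invertible_ker by blast
  then have ex: "\<exists>A'. g ** A' = mat 1 \<and> A' ** g = mat 1" by (simp add: invertible_def)
  have h: "g ** matrix_inv g = mat 1 \<and> matrix_inv g ** g = mat 1"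
    unfolding matrix_inv_def by (rule someI_ex[OF ex])
  have "transpose (matrix_inv g) ** g = mat 1"
    using h gs by (metis matrix_transpose_mul transpose_mat)
  then have "transpose (matrix_inv g) = matrix_inv g"
    using h by (metis matrix_mul_assoc matrix_mul_lid matrix_mul_rid)
  then show ?thesis using h by simp
qed

lemma basis_expand:
  fixes K :: "real^3^3"
  shows "K = (\<Sum>b\<in>UNIV. \<Sum>a\<in>UNIV. K$b$a *\<^sub>R axis b (axis a (1::real)))"
proof -
  have inner: "(\<Sum>a\<in>UNIV. K$b$a * (axis b (axis a (1::real)))$i$j) = (if b = i then K$i$j else 0)" for b i j
  proof (cases "b = i")
    case True
    have e: "(\<lambda>a. K$b$a * (axis b (axis a (1::real)))$i$j) = (\<lambda>a. K$b$a * (if a = j then 1 else 0))"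
      using True by (auto simp: axis_def)
    show ?thesis unfolding e using True by (simp add: sum_delta_mult)
  next
    case False
    then show ?thesis by (simp add: axis_def)
  qed
  have "(\<Sum>b\<in>UNIV. \<Sum>a\<in>UNIV. K$b$a *\<^sub>R axis b (axis a (1::real))) $ i $ j = K $ i $ j" for i j
    by (simp add: sum_component inner)
  then show ?thesis by (simp add: vec_eq_iff)
qed

lemma lin_expand:
  fixes D :: "real^3^3 \<Rightarrow> real"
  assumes "bounded_linear D"
  shows "D K = (\<Sum>b\<in>UNIV. \<Sum>a\<in>UNIV. K$b$a * D (axis b (axis a 1)))"
proof -
  have l: "linear D" using assms by (rule bounded_linear.linear)
  have "D K = D (\<Sum>b\<in>UNIV. \<Sum>a\<in>UNIV. K$b$a *\<^sub>R axis b (axis a (1::real)))"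
    using basis_expand[of K] by simp
  also have "\<dots> = (\<Sum>b\<in>UNIV. \<Sum>a\<in>UNIV. K$b$a * D (axis b (axis a 1)))"
    by (simp add: real_vector.linear_sum[OF l] linear_simps(5)[OF assms])
  finally show ?thesis .
qed

lemma bl_rmult: "bounded_linear (\<lambda>X::real^3^3. X ** F)"
proof -
  have "linear (\<lambda>X::real^3^3. X ** F)"
    by (rule linearI) (simp_all add: mm_add_r mm_scale_l)
  then show ?thesis by (simp add: linear_conv_bounded_linear)
qed

lemma key:
  fixes f :: "real^3^3 \<Rightarrow> real"
  assumes diff: "f differentiable (at F)"
    and inv: "\<And>Q. transpose Q ** g ** Q = g \<Longrightarrow> f (Q ** F) = f F"
    and gh: "g ** h = mat 1" "h ** g = mat 1" "transpose h = h"
  shows "frechet_derivative f (at F) ((h ** Wm p q) ** F) = 0"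
proof -
  define A where "A = h ** Wm p q"
  define \<sigma> where "\<sigma> = h$p$p*h$q$q - h$p$q*h$p$q"
  define Q where "Q t = PA A 1 (sfun \<sigma> t) (kfun \<sigma> t)" for t
  define D where "D = frechet_derivative f (at F)"
  have c: "A ** A ** A = (- \<sigma>) *\<^sub>R A" unfolding A_def \<sigma>_def by (rule cube[OF gh(3)])
  have ga: "transpose A ** g = - (g ** A)" unfolding A_def by (rule gA[OF gh])
  have orth: "transpose (Q t) ** g ** Q t = g" for t
    unfolding Q_def by (rule orth_curve[OF c ga sk_rel])
  have fc: "f (Q t ** F) = f F" for t using inv[OF orth] .
  have Q0: "Q 0 = mat 1" by (simp add: Q_def PA_def sfun_def kfun_def)
  have fD: "(f has_derivative D) (at F)" unfolding D_def using diff by (rule frechet_derivative_works[THEN iffD1])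
  have hQ: "(Q has_derivative (\<lambda>t. t *\<^sub>R A)) (at 0)"
    using curve_deriv[of A \<sigma>] unfolding has_vector_derivative_def Q_def[abs_def] .
  have hQF: "((\<lambda>t. Q t ** F) has_derivative (\<lambda>t. (t *\<^sub>R A) ** F)) (at 0)"
    by (rule bounded_linear.has_derivative[OF bl_rmult hQ])
  have fD0: "(f has_derivative D) (at ((\<lambda>t. Q t ** F) 0))" using fD Q0 by simp
  have ch: "((f \<circ> (\<lambda>t. Q t ** F)) has_derivative (D \<circ> (\<lambda>t. (t *\<^sub>R A) ** F))) (at 0)"
    by (rule diff_chain_at[OF hQF fD0])
  have "(f \<circ> (\<lambda>t. Q t ** F)) = (\<lambda>t. f F)" using fc by (simp add: fun_eq_iff)
  then have ch2: "((\<lambda>t. f F) has_derivative (D \<circ> (\<lambda>t. (t *\<^sub>R A) ** F))) (at 0)" using ch by simp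
  have "((\<lambda>t::real. f F) has_derivative (\<lambda>_. 0)) (at 0)" by (rule has_derivative_const)
  then have "(D \<circ> (\<lambda>t. (t *\<^sub>R A) ** F)) = (\<lambda>_. 0)" using ch2 has_derivative_unique by blast
  then have "D ((1 *\<^sub>R A) ** F) = 0" by (metis comp_apply)
  then show ?thesis by (simp add: D_def A_def)
qed

definition Nsym :: "mat3 \<Rightarrow> (mat3 \<Rightarrow> real) \<Rightarrow> mat3 \<Rightarrow> 3 \<Rightarrow> 3 \<Rightarrow> real" where
  "Nsym h f F p q = (\<Sum>c\<in>UNIV. \<Sum>a\<in>UNIV. h$p$c * dF f F c a * F$q$a)"

lemma symN:
  fixes f :: "real^3^3 \<Rightarrow> real"
  assumes diff: "f differentiable (at F)"
    and inv: "\<And>Q. transpose Q ** g ** Q = g \<Longrightarrow> f (Q ** F) = f F"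
    and gh: "g ** h = mat 1" "h ** g = mat 1" "transpose h = h"
  shows "Nsym h f F p q = Nsym h f F q p"
proof -
  define D where "D = frechet_derivative f (at F)"
  have bl: "bounded_linear D" unfolding D_def
    using diff frechet_derivative_works has_derivative_bounded_linear by blast
  have "0 = D ((h ** Wm p q) ** F)" using key[OF diff inv gh] by (simp add: D_def)
  also have "\<dots> = (\<Sum>b\<in>UNIV. \<Sum>a\<in>UNIV. ((h ** Wm p q) ** F)$b$a * D (axis b (axis a 1)))"
    by (rule lin_expand[OF bl])
  also have "\<dots> = (\<Sum>b\<in>UNIV. \<Sum>a\<in>UNIV. h$p$b * dF f F b a * F$q$a - h$q$b * dF f F b a * F$p$a)"
    unfolding multWh dF_def D_def
    apply (intro sum.cong refl)
    subgoal for b a using symh[OF gh(3), of b p] symh[OF gh(3), of b q] by (simp add: algebra_simps)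
    done
  also have "\<dots> = Nsym h f F p q - Nsym h f F q p"
    by (simp add: Nsym_def sum_subtractf)
  finally show ?thesis by simp
qed

lemma stress_sum:
  "(\<Sum>A\<in>UNIV. stressP g \<phi> \<psi> F $ a $ A * F $ b $ A) = (\<Sum>i\<in>{1..3}. \<phi> i F * Nsym (matrix_inv g) (\<psi> i) F a b)"
proof -
  let ?h = "matrix_inv g"
  define X where "X A c i = \<phi> i F * (?h$a$c * dF (\<psi> i) F c A * F$b$A)" for A c i
  have "(\<Sum>A\<in>UNIV. stressP g \<phi> \<psi> F $ a $ A * F $ b $ A)
     = (\<Sum>A\<in>UNIV. \<Sum>c\<in>UNIV. \<Sum>i\<in>{1..3}. X A c i)"
  proof (intro sum.cong refl)
    fix A
    have "stressP g \<phi> \<psi> F $ a $ A * F $ b $ A = (\<Sum>c\<in>UNIV. ?h $ a $ c * (\<Sum>i\<in>{1..3}. \<phi> i F * dF (\<psi> i) F c A)) * F $ b $ A"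
      unfolding stressP_def by simp
    also have "\<dots> = (\<Sum>c\<in>UNIV. \<Sum>i\<in>{1..3}. ?h $ a $ c * (\<phi> i F * dF (\<psi> i) F c A) * F $ b $ A)"
      by (simp add: sum_distrib_left sum_distrib_right)
    also have "\<dots> = (\<Sum>c\<in>UNIV. \<Sum>i\<in>{1..3}. X A c i)"
      unfolding X_def by (intro sum.cong refl) (simp add: mult_ac)
    finally show "stressP g \<phi> \<psi> F $ a $ A * F $ b $ A = (\<Sum>c\<in>UNIV. \<Sum>i\<in>{1..3}. X A c i)" .
  qed
  also have "\<dots> = (\<Sum>A\<in>UNIV. \<Sum>i\<in>{1..3}. \<Sum>c\<in>UNIV. X A c i)"
    by (rule sum.cong[OF refl]) (rule sum.swap)
  also have "\<dots> = (\<Sum>i\<in>{1..3}. \<Sum>A\<in>UNIV. \<Sum>c\<in>UNIV. X A c i)"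
    by (rule sum.swap)
  also have "\<dots> = (\<Sum>i\<in>{1..3}. \<Sum>c\<in>UNIV. \<Sum>A\<in>UNIV. X A c i)"
  proof (rule sum.cong[OF refl])
    fix i assume "i \<in> {1..3::nat}" show "(\<Sum>A\<in>UNIV. \<Sum>c\<in>UNIV. X A c i) = (\<Sum>c\<in>UNIV. \<Sum>A\<in>UNIV. X A c i)"
      by (rule sum.swap)
  qed
  also have "\<dots> = (\<Sum>i\<in>{1..3}. \<phi> i F * Nsym ?h (\<psi> i) F a b)"
    unfolding X_def Nsym_def by (simp add: sum_distrib_left mult_ac)
  finally show ?thesis .
qed

lemma angmom_gen:
  assumes "\<And>i p q. i \<in> {1..3} \<Longrightarrow> Nsym (matrix_inv g) (\<psi> i) F p q = Nsym (matrix_inv g) (\<psi> i) F q p"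
  shows "angmom (stressP g \<phi> \<psi> F) F"
  unfolding angmom_def stress_sum using assms by simp

lemma rcg_inv:
  assumes "transpose Q ** g ** Q = g"
  shows "rightCG g (Q ** F) = rightCG g F"
proof -
  have "rightCG g (Q ** F) = transpose F ** (transpose Q ** g ** Q) ** F"
    by (simp add: rightCG_def matrix_transpose_mul matrix_mul_assoc)
  then show ?thesis using assms by (simp add: rightCG_def)
qed

lemma part1:
  fixes \<phi> :: "nat \<Rightarrow> 'x \<Rightarrow> mat3 \<Rightarrow> mat3 \<Rightarrow> mat3 \<Rightarrow> real"
  assumes d: "\<forall>i\<in>{1..3}. \<forall>X F G g. metric g \<longrightarrow> (\<lambda>F'. \<psi> i X F' G g) differentiable (at F)"
    and p: "\<forall>i\<in>{1..3}. \<exists>\<psi>'. \<forall>X F G g. \<psi> i X F G g = \<psi>' X (rightCG g F) G g"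
    and g: "metric g"
  shows "angmom (responseP \<phi> \<psi> X F G g) F"
  unfolding responseP_def
proof (rule angmom_gen)
  fix i p' q assume i: "i \<in> {1..3::nat}"
  obtain \<psi>' where \<psi>': "\<forall>X F G g. \<psi> i X F G g = \<psi>' X (rightCG g F) G g" using p i by blast
  have mi: "g ** matrix_inv g = mat 1" "matrix_inv g ** g = mat 1" "transpose (matrix_inv g) = matrix_inv g"
    using metric_inv[OF g] by auto
  show "Nsym (matrix_inv g) (\<lambda>F'. \<psi> i X F' G g) F p' q = Nsym (matrix_inv g) (\<lambda>F'. \<psi> i X F' G g) F q p'"
  proof (rule symN[OF _ _ mi])
    show "(\<lambda>F'. \<psi> i X F' G g) differentiable at F" using d i g by blast
    fix Q assume "transpose Q ** g ** Q = g"
    then show "\<psi> i X (Q ** F) G g = \<psi> i X F G g" using \<psi>' rcg_inv by metis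
  qed
qed

definition phiE :: "nat \<Rightarrow> 'x \<Rightarrow> mat3 \<Rightarrow> mat3 \<Rightarrow> mat3 \<Rightarrow> real" where
  "phiE = (\<lambda>i X F G g. if i = 1 then exp (F$1$1) else 0)"
definition psiE :: "nat \<Rightarrow> 'x \<Rightarrow> mat3 \<Rightarrow> mat3 \<Rightarrow> mat3 \<Rightarrow> real" where
  "psiE = (\<lambda>i X F G g. if i = 1 then rightCG g F $ 1 $ 1 else 0)"

lemma tr_minus: "transpose (- (A::real^3^3)) = - transpose A"
  by (simp add: transpose_def vec_eq_iff)

lemma bb_rcg: fixes g :: "real^3^3" shows "bounded_bilinear (\<lambda>(A::real^3^3) (B::real^3^3). transpose A ** g ** B)"
proof -
  have l1: "linear (\<lambda>B::real^3^3. transpose A ** g ** B)" for A :: "real^3^3"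
    by (rule linearI) (simp_all add: mm_add_l mm_scale_r)
  have l2: "linear (\<lambda>A::real^3^3. transpose A ** g ** B)" for B :: "real^3^3"
    by (rule linearI) (simp_all add: tr_add tr_scale mm_add_r mm_scale_l)
  have "bilinear (\<lambda>(A::real^3^3) (B::real^3^3). transpose A ** g ** B)"
    unfolding bilinear_def by (intro conjI allI l1 l2)
  then show ?thesis by (simp add: bilinear_conv_bounded_bilinear)
qed

lemma bl_11: "bounded_linear (\<lambda>M::real^3^3. M $ i $ j)"
  by (rule bounded_linear_compose[OF bounded_linear_vec_nth bounded_linear_vec_nth])

lemma rcg11_deriv:
  "((\<lambda>F. rightCG g F $ 1 $ 1) has_derivative (\<lambda>H. (transpose F ** g ** H + transpose H ** g ** F) $ 1 $ 1)) (at F)"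
proof -
  have "((\<lambda>F. transpose F ** g ** F) has_derivative (\<lambda>H. transpose F ** g ** H + transpose H ** g ** F)) (at F)"
    by (rule bounded_bilinear.FDERIV[OF bb_rcg has_derivative_ident has_derivative_ident])
  from bounded_linear.has_derivative[OF bl_11 this] show ?thesis unfolding rightCG_def .
qed

lemma psiE_diff: "(\<lambda>F'. psiE i X F' G g) differentiable (at F)"
proof (cases "i = 1")
  case True
  then show ?thesis unfolding psiE_def differentiable_def using rcg11_deriv by auto
next
  case False
  then show ?thesis unfolding psiE_def by simp
qed

lemma psiE_inv: "transpose Q ** g ** Q = g \<Longrightarrow> psiE i X (Q ** F) G g = psiE i X F G g"
  unfolding psiE_def using rcg_inv by simp

lemma part2_angmom:
  assumes g: "metric g"
  shows "angmom (responseP phiE psiE X F G g) F"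
  unfolding responseP_def
proof (rule angmom_gen)
  fix i p' q assume i: "i \<in> {1..3::nat}"
  have mi: "g ** matrix_inv g = mat 1" "matrix_inv g ** g = mat 1" "transpose (matrix_inv g) = matrix_inv g"
    using metric_inv[OF g] by auto
  show "Nsym (matrix_inv g) (\<lambda>F'. psiE i X F' G g) F p' q = Nsym (matrix_inv g) (\<lambda>F'. psiE i X F' G g) F q p'"
  proof (rule symN[where f="\<lambda>F'. psiE i X F' G g", OF _ _ mi])
    show "(\<lambda>F'. psiE i X F' G g) differentiable at F" by (rule psiE_diff)
    fix Q assume "transpose Q ** g ** Q = g"
    then show "psiE i X (Q ** F) G g = psiE i X F G g" by (rule psiE_inv)
  qed
qed

lemma metric_id: "metric (mat 1)"
  unfolding metric_def by (simp add: inner_gt_zero_iff)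

lemma ax_nth: "axis b (axis a (1::real)) $ i $ j = (if i = b \<and> j = a then 1 else 0)"
  by (simp add: axis_def)

lemma entry11:
  fixes X :: 'x
  shows "responseP phiE psiE X F G (mat 1) $ 1 $ 1 = exp (F$1$1) * (2 * F$1$1)"
proof -
  have h: "matrix_inv (mat 1 :: real^3^3) = mat 1"
    using metric_inv[OF metric_id] by (metis matrix_mul_lid)
  define E :: "real^3^3" where "E = axis 1 (axis 1 1)"
  have dd: "dF (\<lambda>F'. psiE 1 X F' G (mat 1)) F b a = (transpose F ** mat 1 ** E' + transpose E' ** mat 1 ** F) $ 1 $ 1"
    if "E' = axis b (axis a 1)" for b a E'
    unfolding dF_def psiE_def that using frechet_derivative_at[OF rcg11_deriv[of "mat 1" F], symmetric] by simp
  have t1: "(transpose F ** E) $ 1 $ 1 = F$1$1"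
  proof -
    have "(transpose F ** E) $ 1 $ 1 = (\<Sum>k\<in>UNIV. F$k$1 * (if k = 1 then 1 else 0))"
      by (simp add: matrix_matrix_mult_def transpose_def E_def ax_nth)
    then show ?thesis by (simp add: sum_delta_mult)
  qed
  have t2: "(transpose E ** F) $ 1 $ 1 = F$1$1"
  proof -
    have "(transpose E ** F) $ 1 $ 1 = (\<Sum>k\<in>UNIV. F$k$1 * (if k = 1 then 1 else 0))"
      by (simp add: matrix_matrix_mult_def transpose_def E_def ax_nth mult.commute)
    then show ?thesis by (simp add: sum_delta_mult)
  qed
  have d11: "dF (\<lambda>F'. psiE 1 X F' G (mat 1)) F 1 1 = 2 * F$1$1"
    using dd[OF E_def] t1 t2 by simp
  have s3: "{1..3::nat} = {1,2,3}" by auto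
  have "responseP phiE psiE X F G (mat 1) $ 1 $ 1 =
      (\<Sum>b\<in>UNIV. (mat 1::real^3^3) $ 1 $ b * (exp (F$1$1) * dF (\<lambda>F'. psiE 1 X F' G (mat 1)) F b 1))"
    unfolding responseP_def stressP_def h s3 by (simp add: phiE_def)
  also have "\<dots> = exp (F$1$1) * dF (\<lambda>F'. psiE 1 X F' G (mat 1)) F 1 1"
  proof -
    have "(\<lambda>b. (mat 1::real^3^3) $ 1 $ b * (exp (F$1$1) * dF (\<lambda>F'. psiE 1 X F' G (mat 1)) F b 1))
        = (\<lambda>b. (exp (F$1$1) * dF (\<lambda>F'. psiE 1 X F' G (mat 1)) F b 1) * (if b = 1 then 1 else 0))"
      by (auto simp: mat_def)
    note e = this
    show ?thesis unfolding e by (simp add: sum_delta_mult)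
  qed
  finally show ?thesis using d11 by simp
qed

lemma part2_nonobj:
  "\<not> objective (responseP (phiE :: nat \<Rightarrow> 'x \<Rightarrow> _) psiE)"
proof
  assume ob: "objective (responseP (phiE :: nat \<Rightarrow> 'x \<Rightarrow> _) psiE)"
  have go: "g_orthogonal (mat 1) (- mat 1)"
    by (simp add: g_orthogonal_def tr_minus mm_minus_l mm_minus_r)
  have all: "\<forall>X F G g Q. metric G \<and> metric g \<and> g_orthogonal g Q \<longrightarrow>
      responseP phiE psiE (X::'x) (Q ** F) G g = Q ** responseP phiE psiE X F G g"
    using ob unfolding objective_def by blast
  have "metric (mat 1) \<and> metric (mat 1) \<and> g_orthogonal (mat 1) (- mat 1)"
    using metric_id go by blast
  then have e: "responseP phiE psiE (undefined::'x) ((- mat 1) ** mat 1) (mat 1) (mat 1)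
      = (- mat 1) ** responseP phiE psiE (undefined::'x) (mat 1) (mat 1) (mat 1)"
    by (rule all[rule_format])
  have "((- mat 1) ** mat 1 :: real^3^3) = - mat 1" by simp
  then have "responseP phiE psiE (undefined::'x) (- mat 1) (mat 1) (mat 1) $ 1 $ 1
      = - (responseP phiE psiE (undefined::'x) (mat 1) (mat 1) (mat 1) $ 1 $ 1)"
    using e by (simp add: mm_minus_l)
  then have "exp (-1) * (2 * -1) = - (exp 1 * (2 * 1::real))"
    unfolding entry11 by (simp add: mat_def)
  then have "exp (-1::real) = exp 1" by simp
  then show False by simp
qed
theorem mainTheorem2:
  shows "(\<forall>(\<phi> :: nat \<Rightarrow> 'x \<Rightarrow> mat3 \<Rightarrow> mat3 \<Rightarrow> mat3 \<Rightarrow> real) \<psi>.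
      (\<forall>i\<in>{1..3}. \<forall>X F G g. metric g \<longrightarrow> (\<lambda>F'. \<psi> i X F' G g) differentiable (at F)) \<and>
      (\<forall>i\<in>{1..3}. \<exists>\<phi>'. \<forall>X F G g. \<phi> i X F G g = \<phi>' X (rightCG g F) G g) \<and>
      (\<forall>i\<in>{1..3}. \<exists>\<psi>'. \<forall>X F G g. \<psi> i X F G g = \<psi>' X (rightCG g F) G g)
      \<longrightarrow> (\<forall>X F G g. metric g \<longrightarrow> angmom (responseP \<phi> \<psi> X F G g) F))
   \<and>
   (\<exists>(\<phi> :: nat \<Rightarrow> 'x \<Rightarrow> mat3 \<Rightarrow> mat3 \<Rightarrow> mat3 \<Rightarrow> real) \<psi>.
      (\<forall>i\<in>{2,3}. \<phi> i = (\<lambda>X F G g. 0) \<and> \<psi> i = (\<lambda>X F G g. 0)) \<and>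
      (\<forall>X F G g. \<phi> 1 X F G g \<noteq> 0) \<and>
      (\<exists>\<psi>'. \<forall>X F G g. \<psi> 1 X F G g = \<psi>' (rightCG g F) G) \<and>
      (\<forall>X F G g. metric g \<longrightarrow> (\<lambda>F'. \<psi> 1 X F' G g) differentiable (at F)) \<and>
      (\<forall>X F G g. metric g \<longrightarrow> angmom (responseP \<phi> \<psi> X F G g) F) \<and>
      \<not> objective (responseP \<phi> \<psi>))"
proof (rule conjI)
  show "\<forall>(\<phi> :: nat \<Rightarrow> 'x \<Rightarrow> mat3 \<Rightarrow> mat3 \<Rightarrow> mat3 \<Rightarrow> real) \<psi>.
      (\<forall>i\<in>{1..3}. \<forall>X F G g. metric g \<longrightarrow> (\<lambda>F'. \<psi> i X F' G g) differentiable (at F)) \<and>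
      (\<forall>i\<in>{1..3}. \<exists>\<phi>'. \<forall>X F G g. \<phi> i X F G g = \<phi>' X (rightCG g F) G g) \<and>
      (\<forall>i\<in>{1..3}. \<exists>\<psi>'. \<forall>X F G g. \<psi> i X F G g = \<psi>' X (rightCG g F) G g)
      \<longrightarrow> (\<forall>X F G g. metric g \<longrightarrow> angmom (responseP \<phi> \<psi> X F G g) F)"
  proof (intro allI impI)
    fix \<phi> :: "nat \<Rightarrow> 'x \<Rightarrow> mat3 \<Rightarrow> mat3 \<Rightarrow> mat3 \<Rightarrow> real" and \<psi> :: "nat \<Rightarrow> 'x \<Rightarrow> mat3 \<Rightarrow> mat3 \<Rightarrow> mat3 \<Rightarrow> real"
    fix X F G g
    assume h: "(\<forall>i\<in>{1..3}. \<forall>X F G g. metric g \<longrightarrow> (\<lambda>F'. \<psi> i X F' G g) differentiable (at F)) \<and>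
      (\<forall>i\<in>{1..3}. \<exists>\<phi>'. \<forall>X F G g. \<phi> i X F G g = \<phi>' X (rightCG g F) G g) \<and>
      (\<forall>i\<in>{1..3}. \<exists>\<psi>'. \<forall>X F G g. \<psi> i X F G g = \<psi>' X (rightCG g F) G g)"
      and g: "metric g"
    show "angmom (responseP \<phi> \<psi> X F G g) F"
      by (rule part1[OF conjunct1[OF h] conjunct2[OF conjunct2[OF h]] g])
  qed
next
  show "\<exists>(\<phi> :: nat \<Rightarrow> 'x \<Rightarrow> mat3 \<Rightarrow> mat3 \<Rightarrow> mat3 \<Rightarrow> real) \<psi>.
      (\<forall>i\<in>{2,3}. \<phi> i = (\<lambda>X F G g. 0) \<and> \<psi> i = (\<lambda>X F G g. 0)) \<and>
      (\<forall>X F G g. \<phi> 1 X F G g \<noteq> 0) \<and>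
      (\<exists>\<psi>'. \<forall>X F G g. \<psi> 1 X F G g = \<psi>' (rightCG g F) G) \<and>
      (\<forall>X F G g. metric g \<longrightarrow> (\<lambda>F'. \<psi> 1 X F' G g) differentiable (at F)) \<and>
      (\<forall>X F G g. metric g \<longrightarrow> angmom (responseP \<phi> \<psi> X F G g) F) \<and>
      \<not> objective (responseP \<phi> \<psi>)"
  proof (rule exI[of _ "phiE :: nat \<Rightarrow> 'x \<Rightarrow> _"], rule exI[of _ "psiE :: nat \<Rightarrow> 'x \<Rightarrow> _"], intro conjI)
    show "\<forall>i\<in>{2,3}. (phiE :: nat \<Rightarrow> 'x \<Rightarrow> _) i = (\<lambda>X F G g. 0) \<and> (psiE :: nat \<Rightarrow> 'x \<Rightarrow> _) i = (\<lambda>X F G g. 0)"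
      by (auto simp: phiE_def psiE_def fun_eq_iff)
    show "\<forall>X F G g. (phiE :: nat \<Rightarrow> 'x \<Rightarrow> _) 1 X F G g \<noteq> 0"
      by (simp add: phiE_def)
    show "\<exists>\<psi>'. \<forall>X F G g. (psiE :: nat \<Rightarrow> 'x \<Rightarrow> _) 1 X F G g = \<psi>' (rightCG g F) G"
      by (rule exI[of _ "\<lambda>C G. C $ 1 $ 1"]) (simp add: psiE_def)
    show "\<forall>X F G g. metric g \<longrightarrow> (\<lambda>F'. (psiE :: nat \<Rightarrow> 'x \<Rightarrow> _) 1 X F' G g) differentiable (at F)"
      by (intro allI impI psiE_diff)
    show "\<forall>X F G g. metric g \<longrightarrow> angmom (responseP (phiE :: nat \<Rightarrow> 'x \<Rightarrow> _) psiE X F G g) F"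
      by (intro allI impI part2_angmom)
    show "\<not> objective (responseP (phiE :: nat \<Rightarrow> 'x \<Rightarrow> _) psiE)"
      by (rule part2_nonobj)
  qed
qed

end
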